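(* Let $\mathcal L:\mathbb F^{q\times q}\to\mathbb F^{n\times n}$ be linear, $m=\operatorname{rank}\mathbb L$, and let $L_1,\ldots,L_m$, $A_1,\ldots,A_m$, $B_1,\ldots,B_m$ be as in the construction below. The following are equivalent: (i) $\mathcal L$ is $*$-linear; (ii) $L=\sum_{k=1}^m\overline{L_k}\otimes A_k$; (iii) $L_k=\sum_{l=1}^m\vec{\mathbf 1}_n^*(B_k\circ\overline{L_l})\vec{\mathbf 1}_q\,A_l$ for $k=1,\ldots,m$. If these hold, then $\vec{\mathbf 1}_n^*(B_k\circ\overline{L_l})\vec{\mathbf 1}_q=\vec{\mathbf 1}_n^*(\overline{B_l}\circ L_k)\vec{\mathbf 1}_q$ for all $k,l=1,\ldots,m$.
   Context: $\mathbb F\in\{\mathbb R,\mathbb C\}$; $\otimes$ Kronecker, $\circ$ Hadamard product, $\vec{\mathbf 1}_p$ all-ones vector, $\overline X$ entrywise conjugate. $*$-linear: $\mathcal L(V^* )=\mathcal L(V)^*$. Matricization $L\in\mathbb F^{n^2\times q^2}$ with $L\operatorname{vec}(V)=\operatorname{vec}(\mathcal L(V))$ (column-stacking), $L=[L_{ij}]$, $1\le i\le n$, $1\le j\le q$, $L_{ij}\in\mathbb F^{n\times q}$; Choi matrix $\mathbb L=[\mathcal L(\mathcal E^{(q)}_{ij})]_{i,j=1}^q$, $m=\operatorname{rank}\mathbb L=\dim\operatorname{span}\{L_{ij}\}$. Construction: $L_1,\ldots,L_m$ span $\operatorname{span}\{L_{ij}\}$; $L_{ij}=\sum_k\alpha^{ij}_kL_k$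 (unique), $L_k=\sum_{i,j}\beta^k_{ij}L_{ij}$ (any choice); $A_k$ has $(i,j)$ entry $\overline{\alpha^{ij}_k}$, $B_k$ has $(i,j)$ entry $\beta^k_{ij}$. (One always has $L=\sum_k\overline{A_k}\otimes L_k$.) *)

theory Defs
  imports "Jordan_Normal_Form.Schur_Decomposition" "Jordan_Normal_Form.DL_Rank"
begin

text \<open>All indices are 0-based. Matrices are Jordan_Normal_Form matrices.\<close>

definition vec_cs :: "'a mat \<Rightarrow> 'a vec" where
  "vec_cs A = vec (dim_row A * dim_col A) (\<lambda>k. A $$ (k mod dim_row A, k div dim_row A))"

definition kron :: "'a :: times mat \<Rightarrow> 'a mat \<Rightarrow> 'a mat" where
  "kron A B = mat (dim_row A * dim_row B) (dim_col A * dim_col B)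
     (\<lambda>(r, s). A $$ (r div dim_row B, s div dim_col B) * B $$ (r mod dim_row B, s mod dim_col B))"

definition hadamard :: "'a :: times mat \<Rightarrow> 'a mat \<Rightarrow> 'a mat" where
  "hadamard A B = mat (dim_row A) (dim_col A) (\<lambda>ij. A $$ ij * B $$ ij)"

definition mconj :: "'a :: conjugate mat \<Rightarrow> 'a mat" where
  "mconj A = map_mat conjugate A"

definition ones_vec :: "nat \<Rightarrow> 'a :: one vec" where
  "ones_vec p = vec p (\<lambda>_. 1)"

definition Emat :: "nat \<Rightarrow> nat \<Rightarrow> nat \<Rightarrow> 'a :: zero_neq_one mat" where
  "Emat q i j = mat q q (\<lambda>(a, b). if a = i \<and> b = j then 1 else 0)"

definition msum :: "nat \<Rightarrow> nat \<Rightarrow> ('b \<Rightarrow> 'a :: comm_monoid_add mat) \<Rightarrow> 'b set \<Rightarrow> 'a mat" where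
  "msum r c f K = mat r c (\<lambda>ij. \<Sum>k\<in>K. f k $$ ij)"

definition blk :: "'a mat \<Rightarrow> nat \<Rightarrow> nat \<Rightarrow> nat \<Rightarrow> nat \<Rightarrow> 'a mat" where
  "blk L n q i j = mat n q (\<lambda>(a, c). L $$ (i * n + a, j * q + c))"

definition choi :: "('a :: zero_neq_one mat \<Rightarrow> 'a mat) \<Rightarrow> nat \<Rightarrow> nat \<Rightarrow> 'a mat" where
  "choi \<L> n q = mat (q * n) (q * n)
     (\<lambda>(r, s). (\<L> (Emat q (r div n) (s div n))) $$ (r mod n, s mod n))"

definition lin_map :: "nat \<Rightarrow> nat \<Rightarrow> ('a :: field mat \<Rightarrow> 'a mat) \<Rightarrow> bool" where
  "lin_map q n \<L> \<longleftrightarrow>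
     (\<forall>V \<in> carrier_mat q q. \<L> V \<in> carrier_mat n n) \<and>
     (\<forall>V \<in> carrier_mat q q. \<forall>W \<in> carrier_mat q q. \<L> (V + W) = \<L> V + \<L> W) \<and>
     (\<forall>V \<in> carrier_mat q q. \<forall>c. \<L> (c \<cdot>\<^sub>m V) = c \<cdot>\<^sub>m \<L> V)"

definition star_linear :: "nat \<Rightarrow> ('a :: conjugatable_field mat \<Rightarrow> 'a mat) \<Rightarrow> bool" where
  "star_linear q \<L> \<longleftrightarrow> (\<forall>V \<in> carrier_mat q q. \<L> (mat_adjoint V) = mat_adjoint (\<L> V))"

definition Amat :: "nat \<Rightarrow> nat \<Rightarrow> (nat \<Rightarrow> nat \<Rightarrow> nat \<Rightarrow> 'a :: conjugate) \<Rightarrow> nat \<Rightarrow> 'a mat" where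
  "Amat n q \<alpha> k = mat n q (\<lambda>(i, j). conjugate (\<alpha> i j k))"

definition Bmat :: "nat \<Rightarrow> nat \<Rightarrow> (nat \<Rightarrow> nat \<Rightarrow> nat \<Rightarrow> 'a) \<Rightarrow> nat \<Rightarrow> 'a mat" where
  "Bmat n q \<beta> k = mat n q (\<lambda>(i, j). \<beta> k i j)"

definition onesform :: "nat \<Rightarrow> nat \<Rightarrow> 'a :: comm_ring_1 mat \<Rightarrow> 'a" where
  "onesform n q M = ones_vec n \<bullet> (M *\<^sub>v ones_vec q)"

end

theory Submission
  imports Defs
begin

lemma conj_sum: "conjugate (\<Sum>x\<in>A. f x) = (\<Sum>x\<in>A. conjugate (f x :: 'a::conjugatable_field))"
  by (cases "finite A") (auto simp: sum_conjugate)

lemma pq_lemma: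
  fixes X :: "nat \<Rightarrow> nat \<Rightarrow> nat \<Rightarrow> nat \<Rightarrow> 'a::conjugatable_field" and n q m :: nat
    and Lv \<alpha> \<beta> :: "nat \<Rightarrow> nat \<Rightarrow> nat \<Rightarrow> 'a"
  assumes FA: "\<forall>a<n. \<forall>i<n. \<forall>c<q. \<forall>j<q. X i a j c = (\<Sum>k<m. \<alpha> i j k * Lv k a c)"
    and FB: "\<forall>k<m. \<forall>a<n. \<forall>c<q. Lv k a c = (\<Sum>i<n. \<Sum>j<q. \<beta> k i j * X i a j c)"
    and IND: "\<forall>cf. (\<forall>a<n. \<forall>c<q. (\<Sum>l<m. cf l * Lv l a c) = 0) \<longrightarrow> (\<forall>l<m. cf l = 0)"
  shows "\<forall>l<m. \<forall>k<m. (\<Sum>i<n. \<Sum>j<q. \<alpha> i j l * \<beta> k i j) = (if l = k then 1 else 0)"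
proof (intro allI impI)
  fix l k assume l: "l < m" and k: "k < m"
  define cf where "cf l' = (\<Sum>i<n. \<Sum>j<q. \<alpha> i j l' * \<beta> k i j) - (if l' = k then 1 else 0)" for l'
  have "\<forall>a<n. \<forall>c<q. (\<Sum>l<m. cf l * Lv l a c) = 0"
  proof (intro allI impI)
    fix a c assume a: "a < n" and c: "c < q"
    have "Lv k a c = (\<Sum>i<n. \<Sum>j<q. \<beta> k i j * (\<Sum>l<m. \<alpha> i j l * Lv l a c))"
    proof -
      have "Lv k a c = (\<Sum>i<n. \<Sum>j<q. \<beta> k i j * X i a j c)" using FB k a c by blast
      also have "\<dots> = (\<Sum>i<n. \<Sum>j<q. \<beta> k i j * (\<Sum>l<m. \<alpha> i j l * Lv l a c))"
        by (intro sum.cong refl, simp add: FA a c)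
      finally show ?thesis .
    qed
    also have "\<dots> = (\<Sum>i<n. \<Sum>j<q. \<Sum>l<m. \<alpha> i j l * \<beta> k i j * Lv l a c)"
      by (simp add: sum_distrib_left mult_ac)
    also have "\<dots> = (\<Sum>i<n. \<Sum>l<m. \<Sum>j<q. \<alpha> i j l * \<beta> k i j * Lv l a c)"
      by (rule sum.cong[OF refl], rule sum.swap)
    also have "\<dots> = (\<Sum>l<m. \<Sum>i<n. \<Sum>j<q. \<alpha> i j l * \<beta> k i j * Lv l a c)"
      by (rule sum.swap)
    also have "\<dots> = (\<Sum>l<m. (\<Sum>i<n. \<Sum>j<q. \<alpha> i j l * \<beta> k i j) * Lv l a c)"
      by (simp add: sum_distrib_right)
    finally have e: "Lv k a c = \<dots>" .
    have "(\<Sum>l<m. cf l * Lv l a c) = (\<Sum>l<m. (\<Sum>i<n. \<Sum>j<q. \<alpha> i j l * \<beta> k i j) * Lv l a c)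
         - (\<Sum>l<m. (if l = k then 1 else 0) * Lv l a c)"
      by (simp add: cf_def left_diff_distrib sum_subtractf)
    also have "(\<Sum>l<m. (if l = k then 1 else 0) * Lv l a c) = Lv k a c"
    proof -
      have "(\<Sum>l<m. (if l = k then 1 else 0) * Lv l a c) = (\<Sum>l<m. if l = k then Lv k a c else 0)"
        by (rule sum.cong) auto
      also have "\<dots> = Lv k a c" using k by (simp add: sum.delta sum.delta')
      finally show ?thesis .
    qed
    finally show "(\<Sum>l<m. cf l * Lv l a c) = 0" using e by simp
  qed
  with IND l have "cf l = 0" by blast
  thus "(\<Sum>i<n. \<Sum>j<q. \<alpha> i j l * \<beta> k i j) = (if l = k then 1 else 0)" by (simp add: cf_def)
qed

lemma core_lemma:
  fixes X :: "nat \<Rightarrow> nat \<Rightarrow> nat \<Rightarrow> nat \<Rightarrow> 'a::conjugatable_field" and n q m :: nat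
    and Lv \<alpha> \<beta> :: "nat \<Rightarrow> nat \<Rightarrow> nat \<Rightarrow> 'a"
  assumes FA: "\<forall>a<n. \<forall>i<n. \<forall>c<q. \<forall>j<q. X i a j c = (\<Sum>k<m. \<alpha> i j k * Lv k a c)"
    and FB: "\<forall>k<m. \<forall>a<n. \<forall>c<q. Lv k a c = (\<Sum>i<n. \<Sum>j<q. \<beta> k i j * X i a j c)"
    and IND: "\<forall>cf. (\<forall>a<n. \<forall>c<q. (\<Sum>l<m. cf l * Lv l a c) = 0) \<longrightarrow> (\<forall>l<m. cf l = 0)"
    and gdef: "\<And>k l. \<gamma> k l = (\<Sum>i<n. \<Sum>j<q. \<beta> k i j * conjugate (Lv l i j))"
  shows "((\<forall>a<n. \<forall>i<n. \<forall>c<q. \<forall>j<q. X i a j c = conjugate (X a i c j)) \<longleftrightarrow>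
          (\<forall>k<m. \<forall>a<n. \<forall>c<q. Lv k a c = (\<Sum>l<m. \<gamma> k l * conjugate (\<alpha> a c l))))
       \<and> ((\<forall>a<n. \<forall>i<n. \<forall>c<q. \<forall>j<q. X i a j c = conjugate (X a i c j)) \<longrightarrow>
          (\<forall>k<m. \<forall>l<m. \<gamma> k l = conjugate (\<gamma> l k)))"
proof -
  have PQ: "\<forall>l<m. \<forall>k<m. (\<Sum>i<n. \<Sum>j<q. \<alpha> i j l * \<beta> k i j) = (if l = k then 1 else 0)"
    by (rule pq_lemma[OF FA FB IND])
  let ?H = "\<forall>a<n. \<forall>i<n. \<forall>c<q. \<forall>j<q. X i a j c = conjugate (X a i c j)"
  let ?T = "\<forall>k<m. \<forall>a<n. \<forall>c<q. Lv k a c = (\<Sum>l<m. \<gamma> k l * conjugate (\<alpha> a c l))"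
  have HT: "?T" if H: ?H
  proof (intro allI impI)
    fix k a c assume k: "k < m" and a: "a < n" and c: "c < q"
    have "Lv k a c = (\<Sum>i<n. \<Sum>j<q. \<beta> k i j * X i a j c)" using FB k a c by blast
    also have "\<dots> = (\<Sum>i<n. \<Sum>j<q. \<beta> k i j * conjugate (\<Sum>l<m. \<alpha> a c l * Lv l i j))"
    proof (intro sum.cong refl)
      fix i j assume i: "i \<in> {..<n}" and j: "j \<in> {..<q}"
      have "X i a j c = conjugate (X a i c j)" using H a c i j by blast
      also have "X a i c j = (\<Sum>l<m. \<alpha> a c l * Lv l i j)" using FA a c i j by blast
      finally show "\<beta> k i j * X i a j c = \<beta> k i j * conjugate (\<Sum>l<m. \<alpha> a c l * Lv l i j)" by simp
    qed
    also have "\<dots> = (\<Sum>i<n. \<Sum>j<q. \<Sum>l<m. \<beta> k i j * conjugate (Lv l i j) * conjugate (\<alpha> a c l))"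
      by (simp add: conj_sum conjugate_dist_mul sum_distrib_left mult_ac)
    also have "\<dots> = (\<Sum>i<n. \<Sum>l<m. \<Sum>j<q. \<beta> k i j * conjugate (Lv l i j) * conjugate (\<alpha> a c l))"
      by (rule sum.cong[OF refl], rule sum.swap)
    also have "\<dots> = (\<Sum>l<m. \<Sum>i<n. \<Sum>j<q. \<beta> k i j * conjugate (Lv l i j) * conjugate (\<alpha> a c l))"
      by (rule sum.swap)
    also have "\<dots> = (\<Sum>l<m. \<gamma> k l * conjugate (\<alpha> a c l))"
      by (simp add: gdef sum_distrib_right)
    finally show "Lv k a c = (\<Sum>l<m. \<gamma> k l * conjugate (\<alpha> a c l))" .
  qed
  have SYM: "\<forall>k<m. \<forall>l<m. \<gamma> k l = conjugate (\<gamma> l k)" if T: ?T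
  proof (intro allI impI)
    fix k l assume k: "k < m" and l: "l < m"
    have "\<gamma> k l = (\<Sum>i<n. \<Sum>j<q. \<beta> k i j * conjugate (\<Sum>l'<m. \<gamma> l l' * conjugate (\<alpha> i j l')))"
    proof -
      have "\<gamma> k l = (\<Sum>i<n. \<Sum>j<q. \<beta> k i j * conjugate (Lv l i j))" by (rule gdef)
      also have "\<dots> = (\<Sum>i<n. \<Sum>j<q. \<beta> k i j * conjugate (\<Sum>l'<m. \<gamma> l l' * conjugate (\<alpha> i j l')))"
      proof (intro sum.cong refl)
        fix i j assume i: "i \<in> {..<n}" and j: "j \<in> {..<q}"
        have "Lv l i j = (\<Sum>l'<m. \<gamma> l l' * conjugate (\<alpha> i j l'))" using T l i j by blast
        thus "\<beta> k i j * conjugate (Lv l i j) = \<beta> k i j * conjugate (\<Sum>l'<m. \<gamma> l l' * conjugate (\<alpha> i j l'))" by simp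
      qed
      finally show ?thesis .
    qed
    also have "\<dots> = (\<Sum>i<n. \<Sum>j<q. \<Sum>l'<m. conjugate (\<gamma> l l') * (\<alpha> i j l' * \<beta> k i j))"
      by (simp add: conj_sum conjugate_dist_mul sum_distrib_left mult_ac)
    also have "\<dots> = (\<Sum>i<n. \<Sum>l'<m. \<Sum>j<q. conjugate (\<gamma> l l') * (\<alpha> i j l' * \<beta> k i j))"
      by (rule sum.cong[OF refl], rule sum.swap)
    also have "\<dots> = (\<Sum>l'<m. \<Sum>i<n. \<Sum>j<q. conjugate (\<gamma> l l') * (\<alpha> i j l' * \<beta> k i j))"
      by (rule sum.swap)
    also have "\<dots> = (\<Sum>l'<m. conjugate (\<gamma> l l') * (\<Sum>i<n. \<Sum>j<q. \<alpha> i j l' * \<beta> k i j))"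
      by (simp add: sum_distrib_left)
    also have "\<dots> = (\<Sum>l'<m. if l' = k then conjugate (\<gamma> l l') else 0)"
      by (intro sum.cong refl, simp add: PQ[rule_format] k)
    also have "\<dots> = conjugate (\<gamma> l k)" using k by simp
    finally show "\<gamma> k l = conjugate (\<gamma> l k)" .
  qed
  have TH: "?H" if T: ?T
  proof (intro allI impI)
    fix a i c j assume a: "a < n" and i: "i < n" and c: "c < q" and j: "j < q"
    have S: "\<forall>k<m. \<forall>l<m. \<gamma> k l = conjugate (\<gamma> l k)" using SYM T by blast
    have "X i a j c = (\<Sum>k<m. \<alpha> i j k * (\<Sum>l<m. \<gamma> k l * conjugate (\<alpha> a c l)))"
    proof -
      have "X i a j c = (\<Sum>k<m. \<alpha> i j k * Lv k a c)" using FA a i c j by blast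
      also have "\<dots> = (\<Sum>k<m. \<alpha> i j k * (\<Sum>l<m. \<gamma> k l * conjugate (\<alpha> a c l)))"
      proof (intro sum.cong refl)
        fix k assume k: "k \<in> {..<m}"
        have "Lv k a c = (\<Sum>l<m. \<gamma> k l * conjugate (\<alpha> a c l))" using T k a c by blast
        thus "\<alpha> i j k * Lv k a c = \<alpha> i j k * (\<Sum>l<m. \<gamma> k l * conjugate (\<alpha> a c l))" by simp
      qed
      finally show ?thesis .
    qed
    also have "\<dots> = (\<Sum>k<m. \<Sum>l<m. \<alpha> i j k * \<gamma> k l * conjugate (\<alpha> a c l))"
      by (simp add: sum_distrib_left mult_ac)
    finally have e1: "X i a j c = \<dots>" .
    have "conjugate (X a i c j) = conjugate (\<Sum>l<m. \<alpha> a c l * (\<Sum>k<m. \<gamma> l k * conjugate (\<alpha> i j k)))"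
    proof -
      have "X a i c j = (\<Sum>l<m. \<alpha> a c l * Lv l i j)" using FA a i c j by blast
      also have "\<dots> = (\<Sum>l<m. \<alpha> a c l * (\<Sum>k<m. \<gamma> l k * conjugate (\<alpha> i j k)))"
      proof (intro sum.cong refl)
        fix l assume l: "l \<in> {..<m}"
        have "Lv l i j = (\<Sum>k<m. \<gamma> l k * conjugate (\<alpha> i j k))" using T l i j by blast
        thus "\<alpha> a c l * Lv l i j = \<alpha> a c l * (\<Sum>k<m. \<gamma> l k * conjugate (\<alpha> i j k))" by simp
      qed
      finally show ?thesis by simp
    qed
    also have "\<dots> = (\<Sum>l<m. \<Sum>k<m. conjugate (\<alpha> a c l) * conjugate (\<gamma> l k) * \<alpha> i j k)"
      by (simp add: conj_sum conjugate_dist_mul sum_distrib_left mult_ac)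
    also have "\<dots> = (\<Sum>l<m. \<Sum>k<m. conjugate (\<alpha> a c l) * \<gamma> k l * \<alpha> i j k)"
    proof (intro sum.cong refl)
      fix l k assume l: "l \<in> {..<m}" and k: "k \<in> {..<m}"
      have "\<gamma> k l = conjugate (\<gamma> l k)" using S l k by blast
      thus "conjugate (\<alpha> a c l) * conjugate (\<gamma> l k) * \<alpha> i j k = conjugate (\<alpha> a c l) * \<gamma> k l * \<alpha> i j k" by simp
    qed
    also have "\<dots> = (\<Sum>k<m. \<Sum>l<m. conjugate (\<alpha> a c l) * \<gamma> k l * \<alpha> i j k)"
      by (rule sum.swap)
    also have "\<dots> = (\<Sum>k<m. \<Sum>l<m. \<alpha> i j k * \<gamma> k l * conjugate (\<alpha> a c l))"
      by (simp add: mult_ac)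
    finally show "X i a j c = conjugate (X a i c j)" using e1 by simp
  qed
  show ?thesis using HT TH SYM by blast
qed

lemma sum_prod_index: "(\<Sum>s<p*q. f s) = (\<Sum>j<p. \<Sum>c<q. f (j*q+c :: nat))"
proof -
  have "(\<Sum>s<p*q. f s) = (\<Sum>j<p. sum f {j*q..<j*q+q})" by (rule sum.nat_group[symmetric])
  also have "\<dots> = (\<Sum>j<p. \<Sum>c<q. f (j*q+c))"
  proof (rule sum.cong[OF refl])
    fix j
    have "sum f {0 + j*q..<q + j*q} = (\<Sum>i\<in>{0..<q}. f (i + j*q))" by (rule sum.shift_bounds_nat_ivl)
    then show "sum f {j*q..<j*q+q} = (\<Sum>c<q. f (j*q+c))"
      by (simp add: atLeast0LessThan add.commute)
  qed
  finally show ?thesis .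
qed

lemma adj_dims[simp]: "dim_row (mat_adjoint A) = dim_col A" "dim_col (mat_adjoint A) = dim_row A"
  by (auto simp: mat_adjoint_def)
lemma adj_index: "i < dim_col A \<Longrightarrow> j < dim_row A \<Longrightarrow> mat_adjoint A $$ (i,j) = conjugate (A $$ (j,i))"
  by (simp add: mat_adjoint_def mat_of_rows_index)

lemma conj_one: "conjugate (1::'a::conjugatable_field) = 1"
proof -
  have h: "conjugate (1::'a) * conjugate 1 = conjugate 1 * 1"
    using conjugate_dist_mul[of "1::'a" 1] by simp
  have "conjugate (1::'a) \<noteq> 0" by simp
  with h show ?thesis using mult_left_cancel by blast
qed

lemma sum_delta_mult[simp]: "finite A \<Longrightarrow> c \<in> A \<Longrightarrow> (\<Sum>x\<in>A. f x * (if x = c then 1 else (0::'a::semiring_1))) = f c"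
proof -
  assume "finite A" "c \<in> A"
  have "(\<Sum>x\<in>A. f x * (if x = c then 1 else (0::'a))) = (\<Sum>x\<in>A. if x = c then f x else 0)"
    by (rule sum.cong) auto
  also have "\<dots> = f c" using \<open>finite A\<close> \<open>c \<in> A\<close> by simp
  finally show ?thesis .
qed

lemma onesform_sum: "M \<in> carrier_mat n q \<Longrightarrow> onesform n q (M::'a::comm_ring_1 mat) = (\<Sum>i<n. \<Sum>j<q. M $$ (i,j))"
  unfolding onesform_def ones_vec_def
  by (simp add: scalar_prod_def mult_mat_vec_def atLeast0LessThan)

lemma idx_lt: "a < n \<Longrightarrow> i < (p::nat) \<Longrightarrow> i*n+a < p*n"
proof -
  assume a: "a < n" and i: "i < p"
  have "i*n+a < i*n+n" using a by simp
  also have "\<dots> = Suc i * n" by simp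
  also have "\<dots> \<le> p * n" using i by (intro mult_right_mono) auto
  finally show ?thesis .
qed

lemma Emat_adj: "c < q \<Longrightarrow> j < q \<Longrightarrow> mat_adjoint (Emat q c j :: 'a::conjugatable_field mat) = Emat q j c"
  by (rule eq_matI) (auto simp: adj_index Emat_def conj_one)

context vec_space begin

lemma rank_mono_span:
  assumes A: "A \<in> carrier_mat n nc" and B: "B \<in> carrier_mat n nc'"
    and sub: "set (cols A) \<subseteq> span (set (cols B))"
  shows "rank A \<le> rank B"
proof -
  define W where "W = span (set (cols B))"
  have cB: "set (cols B) \<subseteq> carrier_vec n" using B cols_dim by blast
  have cA: "set (cols A) \<subseteq> carrier_vec n" using A cols_dim by blast
  have WV: "VectorSpace.subspace class_ring W V" unfolding W_def using span_is_subspace cB by simp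
  have "span (set (cols A)) \<subseteq> W"
    unfolding W_def using sub cB by (simp add: span_is_submodule span_is_subset)
  moreover have "VectorSpace.subspace class_ring (span (set (cols A))) V" using span_is_subspace cA by simp
  ultimately have sub2: "VectorSpace.subspace class_ring (span (set (cols A))) (vs W)"
    using nested_subspaces WV by blast
  have fW: "vectorspace.fin_dim class_ring (vs W)" unfolding W_def using fin_dim_span_cols B by blast
  have fA: "vectorspace.fin_dim class_ring (span_vs (set (cols A)))" using fin_dim_span_cols A by blast
  have "vectorspace.dim class_ring (span_vs (set (cols A))) \<le> vectorspace.dim class_ring (vs W)"
    using vectorspace.subspace_dim[OF subspace_is_vs[OF WV] sub2 fW] fA by simp
  thus ?thesis unfolding rank_def W_def .
qed

lemma sum_in_span:
  assumes S: "S \<subseteq> carrier_vec n" and K: "finite K" and w: "\<And>k. k \<in> K \<Longrightarrow> w k \<in> S"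
  shows "vec n (\<lambda>r. \<Sum>k\<in>K. c k * w k $ r) \<in> span S"
proof -
  have SM: "submodule class_ring (span S) V" using span_is_submodule S by (simp add: module_vec_simps)
  show ?thesis
  using K w
proof (induction K rule: finite_induct)
  case empty
  have "vec n (\<lambda>r. \<Sum>k\<in>{}. c k * w k $ r) = zero V" by (auto simp: module_vec_simps)
  then show ?case using submodule.zero_closed[OF SM] by simp
next
  case (insert x F)
  have wx: "w x \<in> carrier_vec n" using insert S by blast
  have "vec n (\<lambda>r. \<Sum>k\<in>insert x F. c k * w k $ r) = (c x \<cdot>\<^sub>v w x) \<oplus>\<^bsub>V\<^esub> vec n (\<lambda>r. \<Sum>k\<in>F. c k * w k $ r)"
    using insert(1,2) wx by (auto simp: module_vec_simps)
  moreover have "c x \<cdot>\<^sub>v w x \<in> span S"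
  proof -
    have "w x \<in> span S" using span_mem S insert by blast
    then show ?thesis using submodule.smult_closed[OF SM, of "c x" "w x"]
      by (auto simp: module_vec_simps class_ring_simps)
  qed
  moreover have "vec n (\<lambda>r. \<Sum>k\<in>F. c k * w k $ r) \<in> span S" using insert by blast
  ultimately show ?case using submodule.m_closed[OF SM] by simp
qed
qed


end

theorem proposition5p3:
  fixes \<L> :: "'a :: conjugatable_field mat \<Rightarrow> 'a mat"
    and n q m :: nat
    and L :: "'a mat"
    and Lk :: "nat \<Rightarrow> 'a mat"
    and \<alpha> :: "nat \<Rightarrow> nat \<Rightarrow> nat \<Rightarrow> 'a"
    and \<beta> :: "nat \<Rightarrow> nat \<Rightarrow> nat \<Rightarrow> 'a"
  assumes lin: "lin_map q n \<L>"
    and L_carrier: "L \<in> carrier_mat (n * n) (q * q)"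
    and L_matricization: "\<forall>V \<in> carrier_mat q q. L *\<^sub>v vec_cs V = vec_cs (\<L> V)"
    and m_rank: "m = vec_space.rank (q * n) (choi \<L> n q)"
    and Lk_carrier: "\<forall>k < m. Lk k \<in> carrier_mat n q"
    and alpha: "\<forall>i < n. \<forall>j < q. blk L n q i j = msum n q (\<lambda>k. \<alpha> i j k \<cdot>\<^sub>m Lk k) {..<m}"
    and beta: "\<forall>k < m. Lk k = msum n q (\<lambda>(i, j). \<beta> k i j \<cdot>\<^sub>m blk L n q i j) ({..<n} \<times> {..<q})"
  shows "(star_linear q \<L> \<longleftrightarrow>
            L = msum (n * n) (q * q) (\<lambda>k. kron (mconj (Lk k)) (Amat n q \<alpha> k)) {..<m})
       \<and> (star_linear q \<L> \<longleftrightarrow>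
            (\<forall>k < m. Lk k = msum n q
               (\<lambda>l. onesform n q (hadamard (Bmat n q \<beta> k) (mconj (Lk l))) \<cdot>\<^sub>m Amat n q \<alpha> l) {..<m}))
       \<and> (star_linear q \<L> \<longrightarrow>
            (\<forall>k < m. \<forall>l < m.
               onesform n q (hadamard (Bmat n q \<beta> k) (mconj (Lk l)))
             = onesform n q (hadamard (mconj (Bmat n q \<beta> l)) (Lk k))))"
proof -
  have LV: "\<And>V. V \<in> carrier_mat q q \<Longrightarrow> \<L> V \<in> carrier_mat n n" using lin unfolding lin_map_def by blast
  have MV: "\<L> V $$ (a,i) = (\<Sum>j<q. \<Sum>c<q. L $$ (i*n+a, j*q+c) * V $$ (c,j))"
    if V: "V \<in> carrier_mat q q" and a: "a < n" and i: "i < n" for V a i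
  proof -
    have idx: "i*n+a < n*n" using idx_lt[OF a i] .
    have "\<L> V $$ (a,i) = vec_cs (\<L> V) $ (i*n+a)" using LV[OF V] idx a by (simp add: vec_cs_def)
    also have "\<dots> = (L *\<^sub>v vec_cs V) $ (i*n+a)" using L_matricization V by simp
    also have "\<dots> = (\<Sum>s<q*q. L $$ (i*n+a, s) * V $$ (s mod q, s div q))"
      using L_carrier V idx by (simp add: mult_mat_vec_def scalar_prod_def vec_cs_def atLeast0LessThan)
    also have "\<dots> = (\<Sum>j<q. \<Sum>c<q. L $$ (i*n+a, j*q+c) * V $$ ((j*q+c) mod q, (j*q+c) div q))"
      by (rule sum_prod_index)
    also have "\<dots> = (\<Sum>j<q. \<Sum>c<q. L $$ (i*n+a, j*q+c) * V $$ (c,j))"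
      by (intro sum.cong refl) simp
    finally show ?thesis .
  qed
  have FT: "\<L> (Emat q c j) $$ (a,i) = L $$ (i*n+a, j*q+c)"
    if a: "a < n" and i: "i < n" and c: "c < q" and j: "j < q" for a i c j
  proof -
    have E: "Emat q c j \<in> carrier_mat q q" by (simp add: Emat_def)
    have "\<L> (Emat q c j) $$ (a,i) = (\<Sum>j'<q. \<Sum>c'<q. L $$ (i*n+a, j'*q+c') * Emat q c j $$ (c',j'))"
      by (rule MV[OF E a i])
    also have "\<dots> = (\<Sum>j'<q. if j' = j then (\<Sum>c'<q. if c' = c then L $$ (i*n+a, j'*q+c') else 0) else 0)"
    proof (rule sum.cong[OF refl])
      fix j' assume j': "j' \<in> {..<q}"
      show "(\<Sum>c'<q. L $$ (i*n+a, j'*q+c') * Emat q c j $$ (c',j')) =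
        (if j' = j then (\<Sum>c'<q. if c' = c then L $$ (i*n+a, j'*q+c') else 0) else 0)"
        using j' by (auto simp: Emat_def intro!: sum.cong)
    qed
    also have "\<dots> = L $$ (i*n+a, j*q+c)" using c j by simp
    finally show ?thesis .
  qed
  have FA: "L $$ (i*n+a, j*q+c) = (\<Sum>k<m. \<alpha> i j k * Lk k $$ (a,c))"
    if a: "a < n" and i: "i < n" and c: "c < q" and j: "j < q" for a i c j
  proof -
    have "L $$ (i*n+a, j*q+c) = blk L n q i j $$ (a,c)" using a c by (simp add: blk_def)
    also have "\<dots> = (\<Sum>k<m. (\<alpha> i j k \<cdot>\<^sub>m Lk k) $$ (a,c))" using alpha i j a c by (simp add: msum_def)
    also have "\<dots> = (\<Sum>k<m. \<alpha> i j k * Lk k $$ (a,c))"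
      using Lk_carrier a c by (intro sum.cong refl) auto
    finally show ?thesis .
  qed
  have FB: "Lk k $$ (a,c) = (\<Sum>i<n. \<Sum>j<q. \<beta> k i j * L $$ (i*n+a, j*q+c))"
    if k: "k < m" and a: "a < n" and c: "c < q" for k a c
  proof -
    have "Lk k $$ (a,c) = (\<Sum>ij\<in>{..<n} \<times> {..<q}. ((\<lambda>(i, j). \<beta> k i j \<cdot>\<^sub>m blk L n q i j) ij) $$ (a,c))"
      using beta k a c by (simp add: msum_def)
    also have "\<dots> = (\<Sum>ij\<in>{..<n} \<times> {..<q}. \<beta> k (fst ij) (snd ij) * L $$ ((fst ij)*n+a, (snd ij)*q+c))"
      using a c by (intro sum.cong refl) (auto simp: blk_def)
    also have "\<dots> = (\<Sum>i<n. \<Sum>j<q. \<beta> k i j * L $$ (i*n+a, j*q+c))"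
      by (simp add: sum.cartesian_product split_def)
    finally show ?thesis .
  qed
  let ?H = "\<forall>a<n. \<forall>i<n. \<forall>c<q. \<forall>j<q. L $$ (i*n+a, j*q+c) = conjugate (L $$ (a*n+i, c*q+j))"
  have SH: "star_linear q \<L> \<longleftrightarrow> ?H"
  proof
    assume st: "star_linear q \<L>"
    show ?H
    proof (intro allI impI)
      fix a i c j assume a: "a < n" and i: "i < n" and c: "c < q" and j: "j < q"
      have E: "Emat q j c \<in> carrier_mat q q" by (simp add: Emat_def)
      have eq: "\<L> (mat_adjoint (Emat q j c)) = mat_adjoint (\<L> (Emat q j c))"
        using st E unfolding star_linear_def by blast
      have "L $$ (i*n+a, j*q+c) = \<L> (Emat q c j) $$ (a,i)" using FT a i c j by simp
      also have "\<dots> = \<L> (mat_adjoint (Emat q j c)) $$ (a,i)" by (simp only: Emat_adj[OF j c])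
      also have "\<dots> = mat_adjoint (\<L> (Emat q j c)) $$ (a,i)" using eq by simp
      also have "\<dots> = conjugate (\<L> (Emat q j c) $$ (i,a))" using LV[OF E] a i by (simp add: adj_index)
      also have "\<dots> = conjugate (L $$ (a*n+i, c*q+j))" using FT[OF i a j c] by simp
      finally show "L $$ (i*n+a, j*q+c) = conjugate (L $$ (a*n+i, c*q+j))" .
    qed
  next
    assume H: ?H
    show "star_linear q \<L>" unfolding star_linear_def
    proof (intro ballI)
      fix V :: "'a mat" assume V: "V \<in> carrier_mat q q"
      have Va: "mat_adjoint V \<in> carrier_mat q q" using carrier_matD[OF V] by (intro carrier_matI) simp_all
      show "\<L> (mat_adjoint V) = mat_adjoint (\<L> V)"
      proof (rule eq_matI)
        fix a i assume a: "a < dim_row (mat_adjoint (\<L> V))" and i: "i < dim_col (mat_adjoint (\<L> V))"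
        hence a: "a < n" and i: "i < n" using LV[OF V] by auto
        have "\<L> (mat_adjoint V) $$ (a,i) = (\<Sum>j<q. \<Sum>c<q. L $$ (i*n+a, j*q+c) * mat_adjoint V $$ (c,j))"
          by (rule MV[OF Va a i])
        also have "\<dots> = (\<Sum>j<q. \<Sum>c<q. conjugate (L $$ (a*n+i, c*q+j)) * conjugate (V $$ (j,c)))"
        proof (intro sum.cong refl)
          fix j c assume j: "j \<in> {..<q}" and c: "c \<in> {..<q}"
          have "L $$ (i*n+a, j*q+c) = conjugate (L $$ (a*n+i, c*q+j))"
            using H[rule_format, of a i c j] a i j c by simp
          moreover have "mat_adjoint V $$ (c,j) = conjugate (V $$ (j,c))" using V j c by (simp add: adj_index)
          ultimately show "L $$ (i*n+a, j*q+c) * mat_adjoint V $$ (c,j) = conjugate (L $$ (a*n+i, c*q+j)) * conjugate (V $$ (j,c))"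
            by simp
        qed
        also have "\<dots> = (\<Sum>c<q. \<Sum>j<q. conjugate (L $$ (a*n+i, c*q+j)) * conjugate (V $$ (j,c)))"
          by (rule sum.swap)
        also have "\<dots> = conjugate (\<Sum>j<q. \<Sum>c<q. L $$ (a*n+i, j*q+c) * V $$ (c,j))"
          by (simp add: conj_sum conjugate_dist_mul)
        also have "\<dots> = conjugate (\<L> V $$ (i,a))" using MV[OF V i a] by simp
        also have "\<dots> = mat_adjoint (\<L> V) $$ (a,i)" using LV[OF V] a i by (simp add: adj_index)
        finally show "\<L> (mat_adjoint V) $$ (a,i) = mat_adjoint (\<L> V) $$ (a,i)" .
      next
        show "dim_row (\<L> (mat_adjoint V)) = dim_row (mat_adjoint (\<L> V))"
          using LV[OF V] LV[OF Va] by simp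
      next
        show "dim_col (\<L> (mat_adjoint V)) = dim_col (mat_adjoint (\<L> V))"
          using LV[OF V] LV[OF Va] by simp
      qed
    qed
  qed
  define R where "R = msum (n*n) (q*q) (\<lambda>k. kron (mconj (Lk k)) (Amat n q \<alpha> k)) {..<m}"
  have Rent: "R $$ (i*n+a, j*q+c) = conjugate (L $$ (a*n+i, c*q+j))"
    if a: "a < n" and i: "i < n" and c: "c < q" and j: "j < q" for a i c j
  proof -
    have r: "i*n+a < n*n" and s: "j*q+c < q*q" using idx_lt[OF a i] idx_lt[OF c j] .
    have "R $$ (i*n+a, j*q+c) = (\<Sum>k<m. kron (mconj (Lk k)) (Amat n q \<alpha> k) $$ (i*n+a, j*q+c))"
      using r s by (simp add: R_def msum_def)
    also have "\<dots> = (\<Sum>k<m. conjugate (Lk k $$ (i,j)) * conjugate (\<alpha> a c k))"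
    proof (rule sum.cong[OF refl])
      fix k assume "k \<in> {..<m}"
      hence Lc: "Lk k \<in> carrier_mat n q" using Lk_carrier by auto
      show "kron (mconj (Lk k)) (Amat n q \<alpha> k) $$ (i*n+a, j*q+c) = conjugate (Lk k $$ (i,j)) * conjugate (\<alpha> a c k)"
        using Lc r s a i c j by (simp add: kron_def mconj_def Amat_def)
    qed
    also have "\<dots> = conjugate (\<Sum>k<m. \<alpha> a c k * Lk k $$ (i,j))"
      by (simp add: conj_sum conjugate_dist_mul mult.commute)
    also have "\<dots> = conjugate (L $$ (a*n+i, c*q+j))" using FA[OF i a j c] by simp
    finally show ?thesis .
  qed
  have Rc: "R \<in> carrier_mat (n*n) (q*q)" by (simp add: R_def msum_def)
  have RH: "(L = R) \<longleftrightarrow> ?H"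
  proof
    assume LR: "L = R"
    show ?H
    proof (intro allI impI)
      fix a i c j assume a: "a < n" and i: "i < n" and c: "c < q" and j: "j < q"
      have "L $$ (i*n+a, j*q+c) = R $$ (i*n+a, j*q+c)" using LR by simp
      thus "L $$ (i*n+a, j*q+c) = conjugate (L $$ (a*n+i, c*q+j))" using Rent[OF a i c j] by simp
    qed
  next
    assume H: ?H
    show "L = R"
    proof (rule eq_matI)
      fix r s assume r: "r < dim_row R" and s: "s < dim_col R"
      hence r: "r < n*n" and s: "s < q*q" using Rc by auto
      define i a j c where "i = r div n" and "a = r mod n" and "j = s div q" and "c = s mod q"
      have n0: "n > 0" using r by (cases n) auto
      have q0: "q > 0" using s by (cases q) auto
      have ai: "a < n" "i < n" unfolding a_def i_def using n0 r by (auto simp: less_mult_imp_div_less)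
      have cj: "c < q" "j < q" unfolding c_def j_def using q0 s by (auto simp: less_mult_imp_div_less)
      have rs: "r = i*n+a" "s = j*q+c" unfolding i_def a_def j_def c_def by simp_all
      have "L $$ (i*n+a, j*q+c) = conjugate (L $$ (a*n+i, c*q+j))" using H ai cj by blast
      also have "\<dots> = R $$ (i*n+a, j*q+c)" using Rent ai cj by simp
      finally show "L $$ (r,s) = R $$ (r,s)" using rs by simp
    qed (use L_carrier Rc in auto)
  qed
  have IND: "\<forall>cf. (\<forall>a<n. \<forall>c<q. (\<Sum>l<m. cf l * Lk l $$ (a,c)) = 0) \<longrightarrow> (\<forall>l<m. cf l = 0)"
  proof (rule allI, rule impI, rule ccontr)
    fix cf assume dep: "\<forall>a<n. \<forall>c<q. (\<Sum>l<m. cf l * Lk l $$ (a,c)) = 0" and nz: "\<not> (\<forall>l<m. cf l = 0)"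
    then obtain l0 where l0: "l0 < m" and cl0: "cf l0 \<noteq> 0" by auto
    define N where "N = q*n"
    define w where "w k = vec N (\<lambda>r. Lk k $$ (r mod n, r div n))" for k
    define K' where "K' = {..<l0} \<union> {Suc l0..<m}"
    define ks where "ks = [0..<l0] @ [Suc l0..<m]"
    define B where "B = mat_of_cols N (map w ks)"
    define C where "C = choi \<L> n q"
    interpret VS: vec_space "TYPE('a)" N .
    have wc: "w k \<in> carrier_vec N" for k by (simp add: w_def)
    have lks: "length ks = m - 1" using l0 by (simp add: ks_def)
    have setks: "set ks = K'" by (auto simp: ks_def K'_def)
    have Bc: "B \<in> carrier_mat N (m - 1)" using mat_of_cols_carrier(1)[of N "map w ks"] lks by (simp add: B_def)
    have colsB: "set (cols B) = w ` K'"
      unfolding B_def using wc setks by (subst cols_mat_of_cols) auto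
    have rB: "VS.rank B \<le> m - 1" using VS.rank_le_nc[OF Bc] .
    have Cc: "C \<in> carrier_mat N N" by (simp add: C_def choi_def N_def)
    have mK: "{..<m} = insert l0 K'" using l0 by (auto simp: K'_def)
    have l0K: "l0 \<notin> K'" by (simp add: K'_def)
    have fK: "finite K'" by (simp add: K'_def)
    have "set (cols C) \<subseteq> VS.span (set (cols B))"
    proof
      fix v assume "v \<in> set (cols C)"
      then obtain s where s: "s < N" and vs: "v = col C s"
        using Cc by (metis cols_length cols_nth in_set_conv_nth carrier_matD(2))
      define i j where "i = s mod n" and "j = s div n"
      have n0: "n > 0" using s by (cases n) (auto simp: N_def)
      have i: "i < n" and j: "j < q" using s n0 unfolding i_def j_def N_def
        by (auto simp: less_mult_imp_div_less mult.commute)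
      define coef where "coef k = \<alpha> i j k - \<alpha> i j l0 * cf k / cf l0" for k
      have "v = vec N (\<lambda>r. \<Sum>k\<in>K'. coef k * w k $ r)"
      proof (rule eq_vecI)
        fix r assume r: "r < dim_vec (vec N (\<lambda>r. \<Sum>k\<in>K'. coef k * w k $ r))"
        hence r: "r < N" by simp
        define a c where "a = r mod n" and "c = r div n"
        have a: "a < n" and c: "c < q" using r n0 unfolding a_def c_def N_def
          by (auto simp: less_mult_imp_div_less mult.commute)
        let ?x = "\<lambda>k. Lk k $$ (a,c)"
        have "v $ r = C $$ (r, s)" using vs r s Cc by simp
        also have "\<dots> = \<L> (Emat q c j) $$ (a, i)" using r s by (simp add: C_def choi_def N_def a_def c_def i_def j_def)
        also have "\<dots> = L $$ (i*n+a, j*q+c)" by (rule FT[OF a i c j])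
        also have "\<dots> = (\<Sum>k<m. \<alpha> i j k * ?x k)" by (rule FA[OF a i c j])
        also have "\<dots> = \<alpha> i j l0 * ?x l0 + (\<Sum>k\<in>K'. \<alpha> i j k * ?x k)"
          unfolding mK using fK l0K by simp
        also have "?x l0 = - (\<Sum>k\<in>K'. cf k * ?x k) / cf l0"
        proof -
          have "(\<Sum>l<m. cf l * ?x l) = 0" using dep a c by blast
          hence "cf l0 * ?x l0 + (\<Sum>k\<in>K'. cf k * ?x k) = 0" unfolding mK using fK l0K by simp
          thus ?thesis using cl0 by (simp add: field_simps eq_neg_iff_add_eq_0)
        qed
        also have "\<alpha> i j l0 * (- (\<Sum>k\<in>K'. cf k * ?x k) / cf l0) + (\<Sum>k\<in>K'. \<alpha> i j k * ?x k)
             = (\<Sum>k\<in>K'. coef k * ?x k)"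
          by (simp add: coef_def sum_distrib_left sum_divide_distrib algebra_simps sum_subtractf
                        sum_negf[symmetric] diff_divide_distrib sum.distrib[symmetric])
        also have "\<dots> = vec N (\<lambda>r. \<Sum>k\<in>K'. coef k * w k $ r) $ r"
          using r by (simp add: w_def a_def c_def)
        finally show "v $ r = vec N (\<lambda>r. \<Sum>k\<in>K'. coef k * w k $ r) $ r" .
      qed (use vs Cc in auto)
      also have "\<dots> \<in> VS.span (w ` K')"
        by (rule VS.sum_in_span) (use wc fK in auto)
      finally show "v \<in> VS.span (set (cols B))" using colsB by simp
    qed
    hence "VS.rank C \<le> VS.rank B" using VS.rank_mono_span[OF Cc Bc] by simp
    moreover have "VS.rank C = m" using m_rank by (simp add: C_def N_def)
    ultimately show False using rB l0 by simp
  qed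
  define \<gamma> where "\<gamma> k l = (\<Sum>i<n. \<Sum>j<q. \<beta> k i j * conjugate (Lk l $$ (i,j)))" for k l
  have CORE: "(?H \<longleftrightarrow> (\<forall>k<m. \<forall>a<n. \<forall>c<q. Lk k $$ (a,c) = (\<Sum>l<m. \<gamma> k l * conjugate (\<alpha> a c l))))
       \<and> (?H \<longrightarrow> (\<forall>k<m. \<forall>l<m. \<gamma> k l = conjugate (\<gamma> l k)))"
  proof -
    have FA': "\<forall>a<n. \<forall>i<n. \<forall>c<q. \<forall>j<q. L $$ (i*n+a, j*q+c) = (\<Sum>k<m. \<alpha> i j k * Lk k $$ (a,c))"
      using FA by blast
    have FB': "\<forall>k<m. \<forall>a<n. \<forall>c<q. Lk k $$ (a,c) = (\<Sum>i<n. \<Sum>j<q. \<beta> k i j * L $$ (i*n+a, j*q+c))"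
      using FB by blast
    show ?thesis
      by (rule core_lemma[where X = "\<lambda>i a j c. L $$ (i*n+a, j*q+c)" and Lv = "\<lambda>k a c. Lk k $$ (a,c)",
          OF FA' FB' IND \<gamma>_def])
  qed
  have gon: "onesform n q (hadamard (Bmat n q \<beta> k) (mconj (Lk l))) = \<gamma> k l" if l: "l < m" for k l
  proof -
    have Lc: "Lk l \<in> carrier_mat n q" using Lk_carrier l by auto
    have "onesform n q (hadamard (Bmat n q \<beta> k) (mconj (Lk l)))
        = (\<Sum>i<n. \<Sum>j<q. hadamard (Bmat n q \<beta> k) (mconj (Lk l)) $$ (i,j))"
      by (rule onesform_sum) (simp add: hadamard_def Bmat_def)
    also have "\<dots> = \<gamma> k l" unfolding \<gamma>_def
      using Lc by (intro sum.cong refl) (simp add: hadamard_def Bmat_def mconj_def)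
    finally show ?thesis .
  qed
  have gon2: "onesform n q (hadamard (mconj (Bmat n q \<beta> l)) (Lk k)) = conjugate (\<gamma> l k)" if k: "k < m" for k l
  proof -
    have Lc: "Lk k \<in> carrier_mat n q" using Lk_carrier k by auto
    have "onesform n q (hadamard (mconj (Bmat n q \<beta> l)) (Lk k))
        = (\<Sum>i<n. \<Sum>j<q. hadamard (mconj (Bmat n q \<beta> l)) (Lk k) $$ (i,j))"
      by (rule onesform_sum) (simp add: hadamard_def Bmat_def mconj_def)
    also have "\<dots> = (\<Sum>i<n. \<Sum>j<q. conjugate (\<beta> l i j) * Lk k $$ (i,j))"
      using Lc by (intro sum.cong refl) (simp add: hadamard_def Bmat_def mconj_def)
    also have "\<dots> = conjugate (\<gamma> l k)" unfolding \<gamma>_def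
      by (simp add: conj_sum conjugate_dist_mul)
    finally show ?thesis .
  qed
  have TT: "(\<forall>k<m. Lk k = msum n q
               (\<lambda>l. onesform n q (hadamard (Bmat n q \<beta> k) (mconj (Lk l))) \<cdot>\<^sub>m Amat n q \<alpha> l) {..<m})
      \<longleftrightarrow> (\<forall>k<m. \<forall>a<n. \<forall>c<q. Lk k $$ (a,c) = (\<Sum>l<m. \<gamma> k l * conjugate (\<alpha> a c l)))"
  proof -
    have ent: "msum n q (\<lambda>l. onesform n q (hadamard (Bmat n q \<beta> k) (mconj (Lk l))) \<cdot>\<^sub>m Amat n q \<alpha> l) {..<m} $$ (a,c)
        = (\<Sum>l<m. \<gamma> k l * conjugate (\<alpha> a c l))" if a: "a < n" and c: "c < q" for k a c
      using a c by (simp add: msum_def Amat_def) (intro sum.cong refl, simp add: gon)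
    have mc: "msum n q f K \<in> carrier_mat n q" for f K by (simp add: msum_def)
    show ?thesis
    proof
      assume A: "\<forall>k<m. Lk k = msum n q
               (\<lambda>l. onesform n q (hadamard (Bmat n q \<beta> k) (mconj (Lk l))) \<cdot>\<^sub>m Amat n q \<alpha> l) {..<m}"
      show "\<forall>k<m. \<forall>a<n. \<forall>c<q. Lk k $$ (a,c) = (\<Sum>l<m. \<gamma> k l * conjugate (\<alpha> a c l))"
      proof (intro allI impI)
        fix k a c assume k: "k < m" and a: "a < n" and c: "c < q"
        have "Lk k $$ (a,c) = msum n q
               (\<lambda>l. onesform n q (hadamard (Bmat n q \<beta> k) (mconj (Lk l))) \<cdot>\<^sub>m Amat n q \<alpha> l) {..<m} $$ (a,c)"
          using A k by (metis (no_types, lifting))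
        thus "Lk k $$ (a,c) = (\<Sum>l<m. \<gamma> k l * conjugate (\<alpha> a c l))" using ent[OF a c] by simp
      qed
    next
      assume B: "\<forall>k<m. \<forall>a<n. \<forall>c<q. Lk k $$ (a,c) = (\<Sum>l<m. \<gamma> k l * conjugate (\<alpha> a c l))"
      show "\<forall>k<m. Lk k = msum n q
               (\<lambda>l. onesform n q (hadamard (Bmat n q \<beta> k) (mconj (Lk l))) \<cdot>\<^sub>m Amat n q \<alpha> l) {..<m}"
      proof (intro allI impI)
        fix k assume k: "k < m"
        have Lc: "Lk k \<in> carrier_mat n q" using Lk_carrier k by auto
        show "Lk k = msum n q
               (\<lambda>l. onesform n q (hadamard (Bmat n q \<beta> k) (mconj (Lk l))) \<cdot>\<^sub>m Amat n q \<alpha> l) {..<m}"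
        proof (rule eq_matI)
          fix a c assume "a < dim_row (msum n q
               (\<lambda>l. onesform n q (hadamard (Bmat n q \<beta> k) (mconj (Lk l))) \<cdot>\<^sub>m Amat n q \<alpha> l) {..<m})"
            and "c < dim_col (msum n q
               (\<lambda>l. onesform n q (hadamard (Bmat n q \<beta> k) (mconj (Lk l))) \<cdot>\<^sub>m Amat n q \<alpha> l) {..<m})"
          hence a: "a < n" and c: "c < q" by (simp_all add: msum_def)
          show "Lk k $$ (a,c) = msum n q
               (\<lambda>l. onesform n q (hadamard (Bmat n q \<beta> k) (mconj (Lk l))) \<cdot>\<^sub>m Amat n q \<alpha> l) {..<m} $$ (a,c)"
            using B k a c ent[OF a c] by simp
        qed (use Lc in \<open>simp_all add: msum_def\<close>)
      qed
    qed
  qed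
  show ?thesis
  proof (intro conjI)
    show "star_linear q \<L> \<longleftrightarrow>
            L = msum (n * n) (q * q) (\<lambda>k. kron (mconj (Lk k)) (Amat n q \<alpha> k)) {..<m}"
      using SH RH unfolding R_def by simp
    show "star_linear q \<L> \<longleftrightarrow>
            (\<forall>k < m. Lk k = msum n q
               (\<lambda>l. onesform n q (hadamard (Bmat n q \<beta> k) (mconj (Lk l))) \<cdot>\<^sub>m Amat n q \<alpha> l) {..<m})"
      using SH TT CORE by simp
    show "star_linear q \<L> \<longrightarrow>
            (\<forall>k < m. \<forall>l < m.
               onesform n q (hadamard (Bmat n q \<beta> k) (mconj (Lk l)))
             = onesform n q (hadamard (mconj (Bmat n q \<beta> l)) (Lk k)))"
    proof (intro impI allI)
      fix k l assume st: "star_linear q \<L>" and k: "k < m" and l: "l < m"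
      have "?H" using st SH by blast
      hence "\<gamma> k l = conjugate (\<gamma> l k)" using CORE k l by blast
      thus "onesform n q (hadamard (Bmat n q \<beta> k) (mconj (Lk l)))
             = onesform n q (hadamard (mconj (Bmat n q \<beta> l)) (Lk k))"
        using gon[OF l, of k] gon2[OF k, of l] by simp
    qed
  qed
qed

end
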